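(* Let $D:\mathbb R^2\setminus\{0\}\to\mathbb R$ be nonnegative, bounded and continuously differentiable, and consider $\ddot x+D(x)\dot x=-x/|x|^3$, $x\in\mathbb R^2\setminus\{0\}$. Let $r_A,r_B,T>0$. There exists $M>0$ (depending only on $r_A,r_B,T$) such that every solution $x:[-T,0]\to\mathbb R^2\setminus\{0\}$ of this equation with $|x(-T)|=r_A$ and $|x(0)|=r_B$ satisfies $|\dot x(0)|<M$.
   Context: Solutions are twice continuously differentiable and avoid the origin. *)

theory Defs
  imports "HOL-Analysis.Analysis"
begin

definition admissible_friction :: "(real^2 \<Rightarrow> real) \<Rightarrow> bool" where
  "admissible_friction D \<longleftrightarrow>
     (\<forall>y. y \<noteq> 0 \<longrightarrow> D y \<ge> 0) \<and>
     (\<exists>B. \<forall>y. y \<noteq> 0 \<longrightarrow> \<bar>D y\<bar> \<le> B) \<and>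
     (\<exists>D' :: real^2 \<Rightarrow> ((real^2) \<Rightarrow>\<^sub>L real).
        (\<forall>y. y \<noteq> 0 \<longrightarrow> (D has_derivative blinfun_apply (D' y)) (at y)) \<and>
        continuous_on (- {0}) D')"

definition damped_kepler_solution ::
  "(real^2 \<Rightarrow> real) \<Rightarrow> real \<Rightarrow> real \<Rightarrow> (real \<Rightarrow> real^2) \<Rightarrow> (real \<Rightarrow> real^2) \<Rightarrow> (real \<Rightarrow> real^2) \<Rightarrow> bool" where
  "damped_kepler_solution D a b x v w \<longleftrightarrow>
     (\<forall>t\<in>{a..b}. x t \<noteq> 0) \<and>
     (\<forall>t\<in>{a..b}. (x has_vector_derivative v t) (at t within {a..b})) \<and>
     (\<forall>t\<in>{a..b}. (v has_vector_derivative w t) (at t within {a..b})) \<and>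
     continuous_on {a..b} w \<and>
     (\<forall>t\<in>{a..b}. w t + D (x t) *\<^sub>R v t = - (1 / norm (x t) ^ 3) *\<^sub>R x t)"

end

theory Submission
  imports Defs
begin

lemma mono_aux:
  fixes f f' :: "real \<Rightarrow> real"
  assumes "a \<le> b"
    and "\<And>t. t \<in> {a..b} \<Longrightarrow> (f has_real_derivative f' t) (at t within {a..b})"
    and "\<And>t. t \<in> {a..b} \<Longrightarrow> f' t \<ge> c"
  shows "f b - f a \<ge> c * (b - a)"
proof -
  have "\<exists>y\<in>{a..b}. f b - f a = f' y * (b - a)"
  proof (rule mvt_very_simple[OF assms(1), of f "\<lambda>t h. f' t * h", simplified])
    fix t assume "a \<le> t" "t \<le> b"
    then show "(f has_derivative (*) (f' t)) (at t within {a..b})"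
      using assms(2) unfolding has_field_derivative_def by auto
  qed
  then obtain y where y: "y \<in> {a..b}" "f b - f a = f' y * (b - a)" by blast
  then show ?thesis using assms(1) assms(3)[OF y(1)] by (simp add: mult_right_mono mult.commute)
qed

lemma dnorm:
  fixes x :: "real \<Rightarrow> real^2" and v :: "real^2"
  assumes "(x has_vector_derivative v) (at t within S)" "x t \<noteq> 0"
  shows "((\<lambda>t. norm (x t)) has_real_derivative (inner (x t) (v) / norm (x t))) (at t within S)"
proof -
  have "((norm \<circ> x) has_derivative ((\<lambda>h. inner h (sgn (x t))) \<circ> (\<lambda>h. h *\<^sub>R v))) (at t within S)"
    apply (rule diff_chain_within)
    using assms(1) unfolding has_vector_derivative_def apply assumption
    apply (rule has_derivative_at_withinI)
    using has_derivative_norm[OF assms(2)] by simp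
  then show ?thesis unfolding has_field_derivative_def o_def
    by (rule has_derivative_eq_rhs) (simp add: fun_eq_iff sgn_div_norm inner_commute field_simps)
qed

lemma dinner:
  fixes f g :: "real \<Rightarrow> real^2"
  assumes "(f has_vector_derivative f') (at t within S)" "(g has_vector_derivative g') (at t within S)"
  shows "((\<lambda>t. inner (f t) (g t)) has_real_derivative (inner f' (g t) + inner (f t) g')) (at t within S)"
proof -
  have "((\<lambda>t. inner (f t) (g t)) has_derivative (\<lambda>h. inner (f t) (h *\<^sub>R g') + inner (h *\<^sub>R f') (g t))) (at t within S)"
    using has_derivative_inner[OF assms[unfolded has_vector_derivative_def]] .
  then show ?thesis unfolding has_field_derivative_def
    by (rule has_derivative_eq_rhs) (simp add: fun_eq_iff algebra_simps)
qed

lemma energy_deriv: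
  fixes x v w :: "real \<Rightarrow> real^2"
  assumes "(x has_vector_derivative v t) (at t within S)" "(v has_vector_derivative w t) (at t within S)"
    "x t \<noteq> 0"
  shows "((\<lambda>t. inner (v t) (v t) / 2 - 1 / norm (x t)) has_real_derivative
     (inner (w t) (v t) + inner (x t) (v t) / norm (x t) ^ 3)) (at t within S)"
proof -
  have n: "norm (x t) \<noteq> 0" using assms(3) by simp
  have "((\<lambda>t. inner (v t) (v t) / 2 - 1 / norm (x t)) has_real_derivative
     ((inner (w t) (v t) + inner (v t) (w t)) / 2 - (- (inner (x t) (v t) / norm (x t)) / (norm (x t))^2))) (at t within S)"
    apply (rule DERIV_diff)
     apply (rule DERIV_cdivide)
     apply (rule dinner[OF assms(2) assms(2)])
    using DERIV_inverse_fun[OF dnorm[OF assms(1,3)] n] by (simp add: divide_inverse power2_eq_square)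
  then show ?thesis
    by (rule DERIV_cong) (simp add: inner_commute n power3_eq_cube power2_eq_square field_simps)
qed

lemma G_deriv:
  fixes x v w :: "real \<Rightarrow> real^2"
  assumes "(x has_vector_derivative v t) (at t within S)" "(v has_vector_derivative w t) (at t within S)"
    "v t \<noteq> 0"
  shows "((\<lambda>t. inner (x t) (v t) / norm (v t)) has_real_derivative
     (((inner (v t) (v t) + inner (x t) (w t)) * norm (v t) - inner (x t) (v t) * (inner (v t) (w t) / norm (v t))) / (norm (v t))^2)) (at t within S)"
proof -
  have "((\<lambda>t. inner (x t) (v t) / norm (v t)) has_real_derivative
     (((inner (v t) (v t) + inner (x t) (w t)) * norm (v t) - inner (x t) (v t) * (inner (v t) (w t) / norm (v t))) / (norm (v t))^2)) (at t within S)"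
    using DERIV_divide[OF dinner[OF assms(1,2)] dnorm[OF assms(2,3)]] assms(3) by (simp add: power2_eq_square)
  then show ?thesis by (simp add: inner_commute)
qed

lemma G_bound:
  fixes a b p d xw vw s :: real
  assumes a: "a > 0" and b: "b > 0" and xw: "xw = - d * p - 1 / a" and vw: "vw = - d * b^2 - p / a^3"
    and bb: "b^2 \<ge> 2 / a" and bs: "b \<ge> s"
  shows "((b^2 + xw) * b - p * (vw / b)) / b^2 \<ge> s / 2"
proof -
  have e: "((b^2 + xw) * b - p * (vw / b)) / b^2 = (b^2 - 1/a) / b + p^2 / (a^3 * b^3)"
    using a b unfolding xw vw by (simp add: field_simps power2_eq_square power3_eq_cube)
  have "p^2 / (a^3 * b^3) \<ge> 0" using a b by simp
  moreover have "(b^2 - 1/a) / b \<ge> b / 2"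
  proof -
    have "b^2 - 1/a \<ge> b^2/2" using bb by simp
    then have "(b^2 - 1/a) / b \<ge> (b^2/2)/b" by (rule divide_right_mono) (use b in simp)
    also have "(b^2/2)/b = b/2" using b by (simp add: power2_eq_square)
    finally show ?thesis by simp
  qed
  ultimately show ?thesis using e bs by linarith
qed

theorem proposition4p2:
  fixes rA rB T :: real
  assumes "rA > 0" and "rB > 0" and "T > 0"
  shows "\<exists>M>0. \<forall>D x v w. admissible_friction D \<longrightarrow>
           damped_kepler_solution D (-T) 0 x v w \<longrightarrow>
           norm (x (-T)) = rA \<longrightarrow> norm (x 0) = rB \<longrightarrow> norm (v 0) < M"
proof -
  define q where "q = 4 * (rA + rB)^2 / T^2 + 2 / rB"
  define M where "M = sqrt q + 1"
  have q0: "q \<ge> 0" using assms unfolding q_def by simp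
  have "M > 0" unfolding M_def using q0 by (simp add: add_nonneg_pos)
  moreover have "norm (v 0) < M" if adm: "admissible_friction D"
    and sol: "damped_kepler_solution D (-T) 0 x v w"
    and xA: "norm (x (-T)) = rA" and xB: "norm (x 0) = rB" for D x v w
  proof (rule ccontr)
    assume "\<not> norm (v 0) < M"
    then have vM: "norm (v 0) \<ge> M" by simp
    let ?I = "{-T..0}"
    have Dnn: "\<And>y. y \<noteq> 0 \<Longrightarrow> D y \<ge> 0" using adm unfolding admissible_friction_def by blast
    have nz: "\<And>t. t \<in> ?I \<Longrightarrow> x t \<noteq> 0"
      and xd: "\<And>t. t \<in> ?I \<Longrightarrow> (x has_vector_derivative v t) (at t within ?I)"
      and vd: "\<And>t. t \<in> ?I \<Longrightarrow> (v has_vector_derivative w t) (at t within ?I)"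
      and eq: "\<And>t. t \<in> ?I \<Longrightarrow> w t + D (x t) *\<^sub>R v t = - (1 / norm (x t) ^ 3) *\<^sub>R x t"
      using sol unfolding damped_kepler_solution_def by blast+
    have weq: "w t = - D (x t) *\<^sub>R v t - (1 / norm (x t) ^ 3) *\<^sub>R x t" if "t \<in> ?I" for t
    proof -
      have "w t = (w t + D (x t) *\<^sub>R v t) - D (x t) *\<^sub>R v t" by simp
      also have "\<dots> = - (1 / norm (x t) ^ 3) *\<^sub>R x t - D (x t) *\<^sub>R v t" using eq[OF that] by simp
      finally show ?thesis by simp
    qed
    define \<sigma>2 where "\<sigma>2 = norm (v 0)^2 - 2 / rB"
    have "sqrt q < norm (v 0)" using vM unfolding M_def by simp
    then have "sqrt q < sqrt (norm (v 0)^2)" by (simp only: real_sqrt_abs abs_norm_cancel)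
    then have "q < norm (v 0)^2" by (simp only: real_sqrt_less_iff)
    then have s2: "\<sigma>2 > 4 * (rA + rB)^2 / T^2" unfolding \<sigma>2_def q_def by simp
    have "4 * (rA + rB)^2 / T^2 \<ge> 0" by simp
    then have s2pos: "\<sigma>2 > 0" using s2 by linarith
    define E where "E = (\<lambda>t. inner (v t) (v t) / 2 - 1 / norm (x t))"
    have E0: "E 0 = \<sigma>2 / 2" unfolding E_def \<sigma>2_def using xB by (simp add: power2_norm_eq_inner)
    have Emono: "E t \<ge> E 0" if t: "t \<in> ?I" for t
    proof -
      have "(\<lambda>s. - E s) 0 - (\<lambda>s. - E s) t \<ge> 0 * (0 - t)"
      proof (rule mono_aux[where f' = "\<lambda>s. D (x s) * inner (v s) (v s)"])
        show "t \<le> 0" using t by simp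
      next
        fix s assume s: "s \<in> {t..0}"
        then have sI: "s \<in> ?I" using t by auto
        show "0 \<le> D (x s) * inner (v s) (v s)" using Dnn[OF nz[OF sI]] by simp
        have "(E has_real_derivative (inner (w s) (v s) + inner (x s) (v s) / norm (x s) ^ 3)) (at s within ?I)"
          unfolding E_def by (rule energy_deriv[where x=x and v=v and w=w, OF xd[OF sI] vd[OF sI] nz[OF sI]])
        moreover have "inner (w s) (v s) + inner (x s) (v s) / norm (x s) ^ 3 = - (D (x s) * inner (v s) (v s))"
          unfolding weq[OF sI] by (simp add: inner_diff_left algebra_simps)
        ultimately have "(E has_real_derivative - (D (x s) * inner (v s) (v s))) (at s within ?I)"
          by simp
        moreover have "{t..0} \<subseteq> ?I" using t by auto
        ultimately have "(E has_real_derivative - (D (x s) * inner (v s) (v s))) (at s within {t..0})"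
          by (rule DERIV_subset)
        then have "((\<lambda>s. - E s) has_real_derivative - (- (D (x s) * inner (v s) (v s)))) (at s within {t..0})"
          by (rule DERIV_minus)
        then show "((\<lambda>s. - E s) has_real_derivative D (x s) * inner (v s) (v s)) (at s within {t..0})"
          by simp
      qed
      then show ?thesis by simp
    qed
    define \<sigma> where "\<sigma> = sqrt \<sigma>2"
    have \<sigma>pos: "\<sigma> > 0" unfolding \<sigma>_def using s2pos by simp
    have vlow: "norm (v t) \<ge> \<sigma> \<and> norm (v t)^2 \<ge> 2 / norm (x t)" if t: "t \<in> ?I" for t
    proof -
      have "norm (v t)^2 - 2 / norm (x t) \<ge> \<sigma>2"
        using Emono[OF t] E0 unfolding E_def by (simp add: power2_norm_eq_inner)
      moreover have "2 / norm (x t) \<ge> 0" by simp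
      ultimately have h: "norm (v t)^2 \<ge> \<sigma>2" "norm (v t)^2 \<ge> 2 / norm (x t)" using s2pos by linarith+
      have "\<sigma> \<le> sqrt (norm (v t)^2)" unfolding \<sigma>_def using h(1) by (simp only: real_sqrt_le_iff)
      then show ?thesis using h(2) by simp
    qed
    define G where "G = (\<lambda>t. inner (x t) (v t) / norm (v t))"
    have "G 0 - G (-T) \<ge> (\<sigma> / 2) * (0 - (-T))"
    proof (rule mono_aux[where f' = "\<lambda>t. ((inner (v t) (v t) + inner (x t) (w t)) * norm (v t) - inner (x t) (v t) * (inner (v t) (w t) / norm (v t))) / (norm (v t))^2"])
      show "-T \<le> 0" using assms by simp
    next
      fix t assume t: "t \<in> ?I"
      have vnz: "v t \<noteq> 0" using vlow[OF t] \<sigma>pos by auto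
      show "(G has_real_derivative ((inner (v t) (v t) + inner (x t) (w t)) * norm (v t) - inner (x t) (v t) * (inner (v t) (w t) / norm (v t))) / (norm (v t))^2) (at t within ?I)"
        unfolding G_def by (rule G_deriv[where x=x and v=v and w=w, OF xd[OF t] vd[OF t] vnz])
      have ip: "inner (v t) (v t) = norm (v t)^2" by (simp add: power2_norm_eq_inner)
      have a: "norm (x t) > 0" using nz[OF t] by simp
      have xx: "inner (x t) (x t) = norm (x t)^2" by (simp add: power2_norm_eq_inner)
      have xw: "inner (x t) (w t) = - D (x t) * inner (x t) (v t) - 1 / norm (x t)"
        unfolding weq[OF t] using a by (simp add: inner_diff_right xx power2_eq_square power3_eq_cube)
      have vw: "inner (v t) (w t) = - D (x t) * norm (v t)^2 - inner (x t) (v t) / norm (x t)^3"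
        unfolding weq[OF t] by (simp add: inner_diff_right ip inner_commute)
      show "\<sigma> / 2 \<le> ((inner (v t) (v t) + inner (x t) (w t)) * norm (v t) - inner (x t) (v t) * (inner (v t) (w t) / norm (v t))) / (norm (v t))^2"
        unfolding ip
        by (rule G_bound[OF a _ xw vw]) (use vlow[OF t] \<sigma>pos in auto)
    qed
    moreover have "G t \<le> norm (x t)" "- G t \<le> norm (x t)" if t: "t \<in> ?I" for t
    proof -
      have vnz: "norm (v t) > 0" using vlow[OF t] \<sigma>pos by auto
      have "\<bar>G t\<bar> \<le> norm (x t)"
        unfolding G_def using Cauchy_Schwarz_ineq2[of "x t" "v t"] vnz
        by (simp add: abs_div pos_divide_le_eq)
      then show "G t \<le> norm (x t)" "- G t \<le> norm (x t)" by linarith+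
    qed
    ultimately have "\<sigma> / 2 * T \<le> rA + rB"
    proof -
      assume h1: "\<sigma> / 2 * (0 - - T) \<le> G 0 - G (- T)"
        and h2: "\<And>t. t \<in> ?I \<Longrightarrow> G t \<le> norm (x t)" "\<And>t. t \<in> ?I \<Longrightarrow> - G t \<le> norm (x t)"
      have "G 0 \<le> rB" using h2(1)[of 0] xB assms by simp
      moreover have "- G (-T) \<le> rA" using h2(2)[of "-T"] xA assms by simp
      ultimately show ?thesis using h1 by simp
    qed
    then have "\<sigma> \<le> 2 * (rA + rB) / T" using assms by (simp add: field_simps)
    then have "\<sigma>^2 \<le> (2 * (rA + rB) / T)^2" using \<sigma>pos by (simp add: power_mono)
    moreover have "(2 * (rA + rB) / T)^2 = 4 * (rA + rB)^2 / T^2"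
      by (simp add: power_divide power2_eq_square algebra_simps)
    moreover have "\<sigma>^2 = \<sigma>2" unfolding \<sigma>_def using s2pos by simp
    ultimately have "\<sigma>2 \<le> 4 * (rA + rB)^2 / T^2" by simp
    then show False using s2 by simp
  qed
  ultimately show ?thesis by blast
qed

end
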